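(* Let $(\xi_n)_{n\ge0}$ be a real-valued process adapted to a filtration $(\mathcal F_n)_{n\ge0}$, and suppose there exist $a\in\mathbb R$ and $b>0$ such that: (1) $\mathbb E\big((\xi_{k+1}-\xi_k)1_{\{\xi_k\ge a\}}\mid\mathcal F_k\big)\le 0$ a.s. for all $k$; (2) $\limsup_{k\to\infty}1_{\{\xi_k<a<\xi_{k+1}\}}(\xi_{k+1}-a)\le b$ almost surely; (3) $\sum_k\mathbb E\big[(\xi_{k+1}-\xi_k)^2 1_{\{\xi_k\ge a\}}\big]<\infty$. Let $A^\pm_a$ be the event that $\xi_n-a$ switches sign infinitely often. Then almost surely on $A^\pm_a$ we have $\limsup_{n\to\infty}\xi_n\le a+b$. *)

theory Defs
  imports "HOL-Probability.Probability"
begin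

definition filtration_of :: "'a measure \<Rightarrow> (nat \<Rightarrow> 'a measure) \<Rightarrow> bool" where
  "filtration_of M F \<longleftrightarrow> (\<forall>n. subalgebra M (F n)) \<and> (\<forall>n m. n \<le> m \<longrightarrow> sets (F n) \<subseteq> sets (F m))"

definition adapted_to :: "(nat \<Rightarrow> 'a measure) \<Rightarrow> (nat \<Rightarrow> 'a \<Rightarrow> real) \<Rightarrow> bool" where
  "adapted_to F X \<longleftrightarrow> (\<forall>n. X n \<in> borel_measurable (F n))"

definition sign_switch_io :: "(nat \<Rightarrow> 'a \<Rightarrow> real) \<Rightarrow> real \<Rightarrow> 'a \<Rightarrow> bool" where
  "sign_switch_io X a \<omega> \<longleftrightarrow> infinite {n. X n \<omega> < a} \<and> infinite {n. X n \<omega> > a}"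

end

theory Submission
  imports Defs
begin


lemma L2_mult:
  fixes f g :: "'a \<Rightarrow> real"
  assumes "integrable M (\<lambda>x. (f x)\<^sup>2)" "integrable M (\<lambda>x. (g x)\<^sup>2)"
    "f \<in> borel_measurable M" "g \<in> borel_measurable M"
  shows "integrable M (\<lambda>x. f x * g x)"
proof (rule Bochner_Integration.integrable_bound[of _ "\<lambda>x. (f x)\<^sup>2 + (g x)\<^sup>2"])
  show "integrable M (\<lambda>x. (f x)\<^sup>2 + (g x)\<^sup>2)" using assms by auto
  show "(\<lambda>x. f x * g x) \<in> borel_measurable M" using assms by auto
  have "\<bar>f x * g x\<bar> \<le> (f x)\<^sup>2 + (g x)\<^sup>2" for x
  proof -
    have "0 \<le> (\<bar>f x\<bar> - \<bar>g x\<bar>)\<^sup>2" by simp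
    then have "\<bar>f x\<bar> * \<bar>g x\<bar> * 2 \<le> (f x)\<^sup>2 + (g x)\<^sup>2" by (simp add: power2_eq_square algebra_simps)
    moreover have "0 \<le> \<bar>f x\<bar> * \<bar>g x\<bar>" by simp
    ultimately show ?thesis unfolding abs_mult by linarith
  qed
  then show "AE x in M. norm (f x * g x) \<le> norm ((f x)\<^sup>2 + (g x)\<^sup>2)" by auto
qed

lemma (in finite_measure) L2_L1:
  fixes f :: "'a \<Rightarrow> real"
  assumes "integrable M (\<lambda>x. (f x)\<^sup>2)" "f \<in> borel_measurable M"
  shows "integrable M f"
proof (rule Bochner_Integration.integrable_bound[of _ "\<lambda>x. 1 + (f x)\<^sup>2"])
  show "integrable M (\<lambda>x. 1 + (f x)\<^sup>2)" using assms by auto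
  have "\<bar>f x\<bar> \<le> 1 + (f x)\<^sup>2" for x
  proof -
    have "0 \<le> (\<bar>f x\<bar> - 1)\<^sup>2" by simp
    then show ?thesis by (simp add: power2_eq_square algebra_simps)
  qed
  then show "AE x in M. norm (f x) \<le> norm (1 + (f x)\<^sup>2)" by auto
qed (use assms in auto)

lemma filt_mono:
  assumes "filtration_of M F" "j \<le> k" "f \<in> borel_measurable (F j)"
  shows "f \<in> borel_measurable (F k)"
proof -
  have "subalgebra (F k) (F j)" using assms(1,2) unfolding filtration_of_def subalgebra_def by auto
  then show ?thesis using measurable_from_subalg assms(3) by blast
qed

lemma filt_M:
  assumes "filtration_of M F" "f \<in> borel_measurable (F j)"
  shows "f \<in> borel_measurable M"
  using assms measurable_from_subalg unfolding filtration_of_def by blast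

lemma stop_sum:
  fixes w :: "nat \<Rightarrow> real"
  assumes "i \<le> n" "lam \<le> \<bar>\<Sum>k<i. w k\<bar>"
  shows "lam \<le> \<bar>\<Sum>k<n. (\<Prod>j\<in>{..k}. if \<bar>\<Sum>l<j. w l\<bar> < lam then 1 else 0) * w k\<bar>"
proof -
  define \<tau> where "\<tau> = (LEAST i. lam \<le> \<bar>\<Sum>k<i. w k\<bar>)"
  have t1: "lam \<le> \<bar>\<Sum>k<\<tau>. w k\<bar>" unfolding \<tau>_def by (rule LeastI[of _ i]) (rule assms(2))
  have t2: "\<tau> \<le> n" unfolding \<tau>_def using Least_le[of _ i] assms by fastforce
  have c: "(\<Prod>j\<in>{..k}. if \<bar>\<Sum>l<j. w l\<bar> < lam then 1 else (0::real)) = (if k < \<tau> then 1 else 0)" for k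
  proof (cases "k < \<tau>")
    case True
    have "\<bar>\<Sum>l<j. w l\<bar> < lam" if "j \<in> {..k}" for j
    proof -
      have "j < \<tau>" using that True by auto
      then show ?thesis unfolding \<tau>_def using not_less_Least by fastforce
    qed
    then show ?thesis using True by simp
  next
    case False
    have "\<tau> \<in> {..k}" using False by auto
    then have "\<exists>j\<in>{..k}. (if \<bar>\<Sum>l<j. w l\<bar> < lam then 1 else (0::real)) = 0"
      using t1 by (intro bexI[of _ \<tau>]) auto
    then show ?thesis using False by (simp add: prod_zero)
  qed
  have s: "(\<Sum>k<n. (if k < \<tau> then 1 else 0) * w k) = (\<Sum>k<min n \<tau>. w k)" for n
    apply (induction n)
     apply (auto simp: min_def)
    apply (subgoal_tac "n = \<tau>")
     apply auto
    done
  show ?thesis unfolding c s using t1 t2 by (simp add: min_def)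
qed

locale ortho = prob_space M for M :: "'a measure" +
  fixes F :: "nat \<Rightarrow> 'a measure" and W :: "nat \<Rightarrow> 'a \<Rightarrow> real"
  assumes filt: "filtration_of M F"
  and Wmeas: "\<And>k. W k \<in> borel_measurable (F (Suc k))"
  and Wsq: "\<And>k. integrable M (\<lambda>x. (W k x)\<^sup>2)"
  and Worth: "\<And>k Z. Z \<in> borel_measurable (F k) \<Longrightarrow> integrable M (\<lambda>x. (Z x)\<^sup>2)
      \<Longrightarrow> (\<integral>x. Z x * W k x \<partial>M) = 0"
begin

lemma WM: "W k \<in> borel_measurable M" using filt_M[OF filt Wmeas] .

lemma partial:
  "(\<lambda>x. \<Sum>k<n. W k x) \<in> borel_measurable (F n) \<and> integrable M (\<lambda>x. (\<Sum>k<n. W k x)\<^sup>2)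
   \<and> (\<integral>x. (\<Sum>k<n. W k x)\<^sup>2 \<partial>M) = (\<Sum>k<n. \<integral>x. (W k x)\<^sup>2 \<partial>M)"
proof (induction n)
  case 0
  then show ?case by simp
next
  case (Suc n)
  let ?S = "\<lambda>x. \<Sum>k<n. W k x"
  have m1: "?S \<in> borel_measurable (F n)" and i1: "integrable M (\<lambda>x. (?S x)\<^sup>2)"
    and e1: "(\<integral>x. (?S x)\<^sup>2 \<partial>M) = (\<Sum>k<n. \<integral>x. (W k x)\<^sup>2 \<partial>M)" using Suc by auto
  have m1': "?S \<in> borel_measurable (F (Suc n))" using filt_mono[OF filt _ m1] by auto
  have mM: "?S \<in> borel_measurable M" using filt_M[OF filt m1] .
  have ip: "integrable M (\<lambda>x. ?S x * W n x)" using L2_mult[OF i1 Wsq mM WM] .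
  have o: "(\<integral>x. ?S x * W n x \<partial>M) = 0" using Worth[OF m1 i1] .
  have eq: "(\<lambda>x. (\<Sum>k<Suc n. W k x)\<^sup>2) = (\<lambda>x. (?S x)\<^sup>2 + 2 * (?S x * W n x) + (W n x)\<^sup>2)"
    by (auto simp: power2_eq_square algebra_simps)
  have "(\<lambda>x. \<Sum>k<Suc n. W k x) \<in> borel_measurable (F (Suc n))"
    using m1' Wmeas[of n] by simp
  moreover have "integrable M (\<lambda>x. (\<Sum>k<Suc n. W k x)\<^sup>2)"
    unfolding eq using i1 ip Wsq by auto
  moreover have "(\<integral>x. (\<Sum>k<Suc n. W k x)\<^sup>2 \<partial>M) = (\<Sum>k<Suc n. \<integral>x. (W k x)\<^sup>2 \<partial>M)"
    unfolding eq using i1 ip Wsq[of n] o e1 by simp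
  ultimately show ?case by blast
qed

lemma stopped:
  assumes Im: "\<And>k. I k \<in> borel_measurable (F k)" and Ib: "\<And>k x. \<bar>I k x\<bar> \<le> 1"
  shows "ortho M F (\<lambda>k x. I k x * W k x)"
proof
  show "filtration_of M F" by (rule filt)
  fix k
  show "(\<lambda>x. I k x * W k x) \<in> borel_measurable (F (Suc k))"
    using filt_mono[OF filt _ Im[of k], of "Suc k"] Wmeas[of k] by auto
  have IM: "I k \<in> borel_measurable M" using filt_M[OF filt Im] .
  have le: "(I k x * W k x)\<^sup>2 \<le> (W k x)\<^sup>2" for x
  proof -
    have "(I k x)\<^sup>2 \<le> 1" using Ib[of k x] by (simp add: abs_square_le_1)
    then have "(I k x)\<^sup>2 * (W k x)\<^sup>2 \<le> 1 * (W k x)\<^sup>2" by (intro mult_right_mono) auto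
    then show ?thesis by (simp add: power_mult_distrib)
  qed
  show "integrable M (\<lambda>x. (I k x * W k x)\<^sup>2)"
    by (rule Bochner_Integration.integrable_bound[OF Wsq[of k]]) (use IM WM le in auto)
  fix Z :: "'a \<Rightarrow> real" assume Zm: "Z \<in> borel_measurable (F k)" and Zi: "integrable M (\<lambda>x. (Z x)\<^sup>2)"
  have ZM: "Z \<in> borel_measurable M" using filt_M[OF filt Zm] .
  have le2: "(Z x * I k x)\<^sup>2 \<le> (Z x)\<^sup>2" for x
  proof -
    have "(I k x)\<^sup>2 \<le> 1" using Ib[of k x] by (simp add: abs_square_le_1)
    then have "(I k x)\<^sup>2 * (Z x)\<^sup>2 \<le> 1 * (Z x)\<^sup>2" by (intro mult_right_mono) auto
    then show ?thesis by (simp add: power_mult_distrib mult.commute)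
  qed
  have "(\<integral>x. (Z x * I k x) * W k x \<partial>M) = 0"
  proof (rule Worth)
    show "(\<lambda>x. Z x * I k x) \<in> borel_measurable (F k)" using Zm Im[of k] by auto
    show "integrable M (\<lambda>x. (Z x * I k x)\<^sup>2)"
      by (rule Bochner_Integration.integrable_bound[OF Zi]) (use IM ZM le2 in auto)
  qed
  then show "(\<integral>x. Z x * (I k x * W k x) \<partial>M) = 0" by (simp add: mult.assoc)
qed


lemma kolmo:
  assumes lam: "lam > 0"
  shows "measure M (\<Union>i\<in>{..n}. {x\<in>space M. lam \<le> \<bar>\<Sum>k<i. W k x\<bar>})
     \<le> (\<Sum>k<n. \<integral>x. (W k x)\<^sup>2 \<partial>M) / lam\<^sup>2"
proof -
  define I where "I k x = (\<Prod>j\<in>{..k}. if \<bar>\<Sum>l<j. W l x\<bar> < lam then 1 else (0::real))" for k x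
  have Im: "I k \<in> borel_measurable (F k)" for k
  proof -
    have Sj: "(\<lambda>x. \<Sum>l<j. W l x) \<in> borel_measurable (F k)" if "j \<in> {..k}" for j
      using filt_mono[OF filt _ conjunct1[OF partial[of j]], of k] that by auto
    show ?thesis unfolding I_def
      by (intro borel_measurable_prod) (use Sj in measurable)
  qed
  have Ib: "\<bar>I k x\<bar> \<le> 1" for k x
  proof -
    have "0 \<le> I k x" unfolding I_def by (intro prod_nonneg) auto
    moreover have "I k x \<le> 1" unfolding I_def by (intro prod_le_1) auto
    ultimately show ?thesis by simp
  qed
  interpret V: ortho M F "\<lambda>k x. I k x * W k x" using stopped[OF Im Ib] .
  let ?T = "\<lambda>x. \<Sum>k<n. I k x * W k x"
  have Ti: "integrable M (\<lambda>x. (?T x)\<^sup>2)" and Te: "(\<integral>x. (?T x)\<^sup>2 \<partial>M) = (\<Sum>k<n. \<integral>x. (I k x * W k x)\<^sup>2 \<partial>M)"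
    using V.partial[of n] by auto
  have TM: "?T \<in> borel_measurable M" using filt_M[OF filt conjunct1[OF V.partial[of n]]] .
  have le: "(\<Sum>k<n. \<integral>x. (I k x * W k x)\<^sup>2 \<partial>M) \<le> (\<Sum>k<n. \<integral>x. (W k x)\<^sup>2 \<partial>M)"
  proof (rule sum_mono, rule integral_mono)
    fix k x
    have "(I k x)\<^sup>2 \<le> 1" using Ib[of k x] by (simp add: abs_square_le_1)
    then have "(I k x)\<^sup>2 * (W k x)\<^sup>2 \<le> 1 * (W k x)\<^sup>2" by (intro mult_right_mono) auto
    then show "(I k x * W k x)\<^sup>2 \<le> (W k x)\<^sup>2" by (simp add: power_mult_distrib)
  qed (use V.Wsq Wsq in auto)
  have sub: "(\<Union>i\<in>{..n}. {x\<in>space M. lam \<le> \<bar>\<Sum>k<i. W k x\<bar>}) \<subseteq> {x\<in>space M. (?T x)\<^sup>2 \<ge> lam\<^sup>2}"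
  proof (intro subsetI)
    fix x assume "x \<in> (\<Union>i\<in>{..n}. {x\<in>space M. lam \<le> \<bar>\<Sum>k<i. W k x\<bar>})"
    then obtain i where "x \<in> space M" "i \<in> {..n}" "lam \<le> \<bar>\<Sum>k<i. W k x\<bar>" by auto
    then have "lam \<le> \<bar>?T x\<bar>" unfolding I_def using stop_sum[of i n lam "\<lambda>k. W k x"] by auto
    then have "lam\<^sup>2 \<le> \<bar>?T x\<bar>\<^sup>2" using lam by (intro power_mono) auto
    then show "x \<in> {x\<in>space M. (?T x)\<^sup>2 \<ge> lam\<^sup>2}" using \<open>x \<in> space M\<close> by simp
  qed
  have "measure M (\<Union>i\<in>{..n}. {x\<in>space M. lam \<le> \<bar>\<Sum>k<i. W k x\<bar>}) \<le> measure M {x\<in>space M. (?T x)\<^sup>2 \<ge> lam\<^sup>2}"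
    by (rule finite_measure_mono[OF sub]) (use TM in measurable)
  also have "\<dots> \<le> (\<integral>x. (?T x)\<^sup>2 \<partial>M) / lam\<^sup>2"
    by (rule integral_Markov_inequality_measure[OF Ti, of "space M"]) (use lam in auto)
  also have "\<dots> \<le> (\<Sum>k<n. \<integral>x. (W k x)\<^sup>2 \<partial>M) / lam\<^sup>2"
    unfolding Te by (rule divide_right_mono[OF le]) simp
  finally show ?thesis .
qed

lemma shift: "ortho M (\<lambda>k. F (m + k)) (\<lambda>k. W (m + k))"
proof
  show "filtration_of M (\<lambda>k. F (m + k))" using filt unfolding filtration_of_def by auto
  fix k
  show "W (m + k) \<in> borel_measurable (F (m + Suc k))" using Wmeas[of "m+k"] by simp
  show "integrable M (\<lambda>x. (W (m + k) x)\<^sup>2)" by (rule Wsq)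
  fix Z :: "'a \<Rightarrow> real" assume "Z \<in> borel_measurable (F (m + k))" "integrable M (\<lambda>x. (Z x)\<^sup>2)"
  then show "(\<integral>x. Z x * W (m + k) x \<partial>M) = 0" by (rule Worth)
qed

lemma cauchy_lam:
  assumes sm: "summable (\<lambda>k. \<integral>x. (W k x)\<^sup>2 \<partial>M)" and lam: "lam > 0"
  shows "AE x in M. \<exists>m. \<forall>i. \<bar>\<Sum>k<i. W (m + k) x\<bar> < lam"
proof -
  define A where "A m = (\<Union>i. {x\<in>space M. lam \<le> \<bar>\<Sum>k<i. W (m + k) x\<bar>})" for m
  define B where "B m n = (\<Union>i\<in>{..n}. {x\<in>space M. lam \<le> \<bar>\<Sum>k<i. W (m + k) x\<bar>})" for m n
  define \<sigma> where "\<sigma> m = (\<Sum>k. \<integral>x. (W (k + m) x)\<^sup>2 \<partial>M) / lam\<^sup>2" for m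
  have Wm: "(\<lambda>x. \<Sum>k<i. W (m + k) x) \<in> borel_measurable M" for m i
    using WM by auto
  have Bs: "B m n \<in> sets M" for m n unfolding B_def using Wm by measurable
  have As: "A m \<in> sets M" for m unfolding A_def using Wm by measurable
  have AB: "A m = (\<Union>n. B m n)" for m unfolding A_def B_def by auto
  have sig0: "\<sigma> \<longlonglongrightarrow> 0"
    unfolding \<sigma>_def using tendsto_divide_zero[OF suminf_exist_split2[OF sm]] by simp
  have Ale: "measure M (A m) \<le> \<sigma> m" for m
  proof -
    interpret S: ortho M "\<lambda>k. F (m + k)" "\<lambda>k. W (m + k)" by (rule shift)
    have smm: "summable (\<lambda>k. \<integral>x. (W (k + m) x)\<^sup>2 \<partial>M)" using sm summable_iff_shift[where f="\<lambda>k. \<integral>x. (W k x)\<^sup>2 \<partial>M" and k=m] by simp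
    have "(\<lambda>n. measure M (B m n)) \<longlonglongrightarrow> measure M (\<Union>n. B m n)"
    proof (rule finite_Lim_measure_incseq)
      show "range (B m) \<subseteq> sets M" using Bs by auto
      show "incseq (B m)" unfolding B_def incseq_def by (force intro: order_trans)
    qed
    moreover have "measure M (B m n) \<le> \<sigma> m" for n
    proof -
      have "measure M (B m n) \<le> (\<Sum>k<n. \<integral>x. (W (m + k) x)\<^sup>2 \<partial>M) / lam\<^sup>2"
        unfolding B_def by (rule S.kolmo[OF lam])
      also have "\<dots> \<le> \<sigma> m" unfolding \<sigma>_def
        by (rule divide_right_mono) (use sum_le_suminf[OF smm, of "{..<n}"] in \<open>auto simp: add.commute\<close>)
      finally show ?thesis .
    qed
    ultimately show ?thesis unfolding AB by (intro LIMSEQ_le_const2) auto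
  qed
  define N where "N = (\<Inter>m. A m)"
  have Ns: "N \<in> sets M" unfolding N_def using As by auto
  have "measure M N \<le> 0"
  proof (rule LIMSEQ_le_const[OF sig0], intro exI allI impI)
    fix m :: nat
    have "measure M N \<le> measure M (A m)" unfolding N_def by (rule finite_measure_mono) (use As in auto)
    then show "measure M N \<le> \<sigma> m" using Ale[of m] by simp
  qed
  then have "measure M N = 0" using measure_nonneg[of M N] by simp
  then have "N \<in> null_sets M" using Ns by (intro null_setsI) (simp add: emeasure_eq_measure)
  then show ?thesis
  proof (rule AE_I')
    show "{x \<in> space M. \<not> (\<exists>m. \<forall>i. \<bar>\<Sum>k<i. W (m + k) x\<bar> < lam)} \<subseteq> N"
      unfolding N_def A_def by (auto simp: not_less)
  qed
qed

lemma shift_sum: "(\<Sum>k\<in>{m..<m+i}. f k) = (\<Sum>k<i. f (m + k::nat))"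
  by (induction i) auto

lemma cauchy:
  assumes sm: "summable (\<lambda>k. \<integral>x. (W k x)\<^sup>2 \<partial>M)"
  shows "AE x in M. \<forall>e>0. \<exists>m. \<forall>j\<ge>m. \<bar>\<Sum>k\<in>{m..<j}. W k x\<bar> < e"
proof -
  have "AE x in M. \<forall>r::nat. \<exists>m. \<forall>i. \<bar>\<Sum>k<i. W (m + k) x\<bar> < 1 / Suc r"
    by (subst AE_all_countable) (intro allI cauchy_lam[OF sm]; simp)
  then show ?thesis
  proof eventually_elim
    case (elim x)
    show ?case
    proof (intro allI impI)
      fix e :: real assume "e > 0"
      then obtain r where "inverse (real (Suc r)) < e" using reals_Archimedean by blast
      then have r: "1 / Suc r < e" by (simp add: inverse_eq_divide)
      then obtain m where m: "\<And>i. \<bar>\<Sum>k<i. W (m + k) x\<bar> < 1 / Suc r" using elim by blast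
      have "\<bar>\<Sum>k\<in>{m..<j}. W k x\<bar> < e" if "j \<ge> m" for j
      proof -
        have "j = m + (j - m)" using that by simp
        then have "(\<Sum>k\<in>{m..<j}. W k x) = (\<Sum>k<j-m. W (m + k) x)" using shift_sum[of "\<lambda>k. W k x" m "j-m"] by simp
        then show ?thesis using m[of "j-m"] r by simp
      qed
      then show "\<exists>m. \<forall>j\<ge>m. \<bar>\<Sum>k\<in>{m..<j}. W k x\<bar> < e" by blast
    qed
  qed
qed

end


lemma pathwise:
  fixes xi Y :: "nat \<Rightarrow> real"
  assumes b: "b > 0"
    and D: "\<And>k. a \<le> xi k \<Longrightarrow> xi (Suc k) - xi k \<le> Y k"
    and cauchy: "\<forall>e>0. \<exists>m. \<forall>j\<ge>m. \<bar>\<Sum>k\<in>{m..<j}. Y k\<bar> < e"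
    and ls: "limsup (\<lambda>k. ereal ((if xi k < a \<and> a < xi (Suc k) then 1 else 0) * (xi (Suc k) - a))) \<le> ereal b"
    and inf: "infinite {n. xi n < a}"
  shows "limsup (\<lambda>n. ereal (xi n)) \<le> ereal (a + b)"
proof (rule ereal_le_epsilon2)
  fix e' :: real assume "0 < e'"
  define e where "e = e' / 2"
  have e: "e > 0" using \<open>0 < e'\<close> by (simp add: e_def)
  have "limsup (\<lambda>k. ereal ((if xi k < a \<and> a < xi (Suc k) then 1 else 0) * (xi (Suc k) - a))) < ereal (b + e)"
    using ls e by (simp add: order_le_less_trans)
  then have "eventually (\<lambda>k. ereal ((if xi k < a \<and> a < xi (Suc k) then 1 else 0) * (xi (Suc k) - a)) < ereal (b + e)) sequentially"
    by (rule Limsup_lessD)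
  then obtain N1 where N1: "\<And>k. k \<ge> N1 \<Longrightarrow> (if xi k < a \<and> a < xi (Suc k) then 1 else 0) * (xi (Suc k) - a) < b + e"
    unfolding eventually_sequentially by auto
  obtain m0 where m0: "\<And>j. j \<ge> m0 \<Longrightarrow> \<bar>\<Sum>k\<in>{m0..<j}. Y k\<bar> < e / 2"
    using cauchy e by (meson half_gt_zero)
  have cs: "\<bar>\<Sum>k\<in>{i..<j}. Y k\<bar> < e" if "m0 \<le> i" "i \<le> j" for i j
  proof -
    have "(\<Sum>k\<in>{m0..<i}. Y k) + (\<Sum>k\<in>{i..<j}. Y k) = (\<Sum>k\<in>{m0..<j}. Y k)"
      using that by (intro sum.atLeastLessThan_concat) auto
    moreover have "\<bar>\<Sum>k\<in>{m0..<i}. Y k\<bar> < e / 2" "\<bar>\<Sum>k\<in>{m0..<j}. Y k\<bar> < e / 2"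
      using m0 that by auto
    ultimately show ?thesis by linarith
  qed
  obtain p where p: "p \<ge> max N1 m0" "xi p < a"
    using inf unfolding infinite_nat_iff_unbounded_le by (metis mem_Collect_eq)
  have claim: "xi (p + d) < a \<or> (\<exists>q. p \<le> q \<and> q < p + d \<and> xi (Suc q) \<le> a + b + e \<and>
      xi (p + d) - xi (Suc q) \<le> (\<Sum>k\<in>{Suc q..<p + d}. Y k))" for d
  proof (induction d)
    case 0
    then show ?case using p by simp
  next
    case (Suc d)
    let ?n = "p + d"
    show ?case
    proof (cases "xi (Suc ?n) < a")
      case True
      then show ?thesis by simp
    next
      case False
      show ?thesis
      proof (cases "xi ?n < a")
        case True
        have "xi (Suc ?n) \<le> a + b + e"
        proof (cases "a < xi (Suc ?n)")
          case True
          then show ?thesis using N1[of ?n] p \<open>xi ?n < a\<close> by auto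
        next
          case False
          then show ?thesis using b e by auto
        qed
        then show ?thesis by (intro disjI2 exI[of _ ?n]) auto
      next
        case False
        then obtain q where q: "p \<le> q" "q < ?n" "xi (Suc q) \<le> a + b + e"
          "xi ?n - xi (Suc q) \<le> (\<Sum>k\<in>{Suc q..<?n}. Y k)" using Suc.IH by auto
        have "xi (Suc ?n) - xi ?n \<le> Y ?n" using D False by simp
        moreover have "(\<Sum>k\<in>{Suc q..<Suc ?n}. Y k) = (\<Sum>k\<in>{Suc q..<?n}. Y k) + Y ?n"
          using q by (intro sum.atLeastLessThan_Suc) auto
        ultimately show ?thesis using q by (intro disjI2 exI[of _ q]) auto
      qed
    qed
  qed
  have "eventually (\<lambda>n. ereal (xi n) \<le> ereal (a + b) + ereal e') sequentially"
    unfolding eventually_sequentially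
  proof (intro exI allI impI)
    fix n assume "p \<le> n"
    then obtain d where nd: "n = p + d" using le_Suc_ex by blast
    have "xi n \<le> a + b + 2 * e"
      using claim[of d]
    proof
      assume "xi (p + d) < a" then show ?thesis using nd b e by simp
    next
      assume "\<exists>q. p \<le> q \<and> q < p + d \<and> xi (Suc q) \<le> a + b + e \<and>
        xi (p + d) - xi (Suc q) \<le> (\<Sum>k\<in>{Suc q..<p + d}. Y k)"
      then obtain q where q: "p \<le> q" "q < p + d" "xi (Suc q) \<le> a + b + e"
        "xi (p + d) - xi (Suc q) \<le> (\<Sum>k\<in>{Suc q..<p + d}. Y k)" by blast
      have "\<bar>\<Sum>k\<in>{Suc q..<p + d}. Y k\<bar> < e" using q p by (intro cs) auto
      then show ?thesis using q nd by simp
    qed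
    then show "ereal (xi n) \<le> ereal (a + b) + ereal e'" by (simp add: e_def)
  qed
  then show "limsup (\<lambda>n. ereal (xi n)) \<le> ereal (a + b) + ereal e'"
    by (rule Limsup_bounded)
qed



theorem mainTheorem4:
  fixes M :: "'a measure" and F :: "nat \<Rightarrow> 'a measure"
    and \<xi> :: "nat \<Rightarrow> 'a \<Rightarrow> real" and a b :: real
  assumes "prob_space M"
    and "filtration_of M F"
    and "adapted_to F \<xi>"
    and "b > 0"
    and "\<And>k. AE \<omega> in M. real_cond_exp M (F k)
            (\<lambda>x. (\<xi> (Suc k) x - \<xi> k x) * indicator {y. \<xi> k y \<ge> a} x) \<omega> \<le> 0"
    and "AE \<omega> in M. limsup (\<lambda>k. ereal (indicator {y. \<xi> k y < a \<and> a < \<xi> (Suc k) y} \<omega>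
            * (\<xi> (Suc k) \<omega> - a))) \<le> ereal b"
    and "(\<Sum>k. \<integral>\<^sup>+ \<omega>. ennreal ((\<xi> (Suc k) \<omega> - \<xi> k \<omega>)\<^sup>2
            * indicator {y. \<xi> k y \<ge> a} \<omega>) \<partial>M) < \<infinity>"
  shows "AE \<omega> in M. sign_switch_io \<xi> a \<omega> \<longrightarrow> limsup (\<lambda>n. ereal (\<xi> n \<omega>)) \<le> ereal (a + b)"
proof -
  interpret prob_space M by (rule assms(1))
  note filt = assms(2)
  define D where "D k x = (\<xi> (Suc k) x - \<xi> k x) * indicator {y. \<xi> k y \<ge> a} x" for k x
  define C where "C k = real_cond_exp M (F k) (D k)" for k
  define Y where "Y k x = D k x - C k x" for k x
  have subalg: "subalgebra M (F k)" for k using filt unfolding filtration_of_def by auto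
  have sfs: "sigma_finite_subalgebra M (F k)" for k
    by (rule finite_measure_subalgebra_is_sigma_finite) (unfold_locales, rule subalg)
  have xiF: "\<xi> k \<in> borel_measurable (F k)" for k using assms(3) unfolding adapted_to_def by auto
  have xiF': "\<xi> k \<in> borel_measurable (F (Suc k))" for k using filt_mono[OF filt _ xiF[of k]] by auto
  have xiM: "\<xi> k \<in> borel_measurable M" for k using filt_M[OF filt xiF] .
  have Deq: "D k = (\<lambda>x. (\<xi> (Suc k) x - \<xi> k x) * (if a \<le> \<xi> k x then 1 else 0))" for k
    unfolding D_def by (auto simp: indicator_def)
  have DF: "D k \<in> borel_measurable (F (Suc k))" for k
    unfolding Deq using xiF[of "Suc k"] xiF'[of k] by measurable
  have DM: "D k \<in> borel_measurable M" for k using filt_M[OF filt DF] .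
  have CF: "C k \<in> borel_measurable (F k)" for k unfolding C_def by simp
  have CM: "C k \<in> borel_measurable M" for k unfolding C_def by simp
  have nneq: "(\<integral>\<^sup>+ \<omega>. ennreal ((\<xi> (Suc k) \<omega> - \<xi> k \<omega>)\<^sup>2 * indicator {y. \<xi> k y \<ge> a} \<omega>) \<partial>M)
     = (\<integral>\<^sup>+ \<omega>. ennreal ((D k \<omega>)\<^sup>2) \<partial>M)" for k
    unfolding D_def by (intro nn_integral_cong) (auto simp: indicator_def)
  have fin: "(\<Sum>k. \<integral>\<^sup>+ \<omega>. ennreal ((D k \<omega>)\<^sup>2) \<partial>M) < \<infinity>" using assms(7) unfolding nneq .
  have termfin: "(\<integral>\<^sup>+ \<omega>. ennreal ((D k \<omega>)\<^sup>2) \<partial>M) < \<infinity>" for k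
    using ennreal_suminf_lessD[OF fin] .
  have Dsq: "integrable M (\<lambda>x. (D k x)\<^sup>2)" for k
    by (rule integrableI_bounded) (use DM termfin in auto)
  have Dint: "integrable M (D k)" for k using L2_L1[OF Dsq DM] .
  have nnD: "(\<integral>\<^sup>+ \<omega>. ennreal ((D k \<omega>)\<^sup>2) \<partial>M) = ennreal (\<integral>\<omega>. (D k \<omega>)\<^sup>2 \<partial>M)" for k
    by (rule nn_integral_eq_integral[OF Dsq]) auto
  have Dsum: "summable (\<lambda>k. \<integral>\<omega>. (D k \<omega>)\<^sup>2 \<partial>M)"
    by (rule summable_suminf_not_top) (use fin in \<open>auto simp: nnD\<close>)
  have Csq: "integrable M (\<lambda>x. (C k x)\<^sup>2)" for k
    unfolding C_def
    by (rule sigma_finite_subalgebra.integrable_convex_cond_exp[OF sfs Dint, where I=UNIV])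
      (auto simp: Dsq convex_power_even)
  have Cle: "(\<integral>x. (C k x)\<^sup>2 \<partial>M) \<le> (\<integral>x. (D k x)\<^sup>2 \<partial>M)" for k
  proof -
    have "AE x in M. (C k x)\<^sup>2 \<le> real_cond_exp M (F k) (\<lambda>x. (D k x)\<^sup>2) x"
      unfolding C_def
      by (rule sigma_finite_subalgebra.real_cond_exp_jensens_inequality(2)[OF sfs Dint, where I=UNIV])
        (auto simp: Dsq convex_power_even)
    then have "(\<integral>x. (C k x)\<^sup>2 \<partial>M) \<le> (\<integral>x. real_cond_exp M (F k) (\<lambda>x. (D k x)\<^sup>2) x \<partial>M)"
      by (intro integral_mono_AE Csq sigma_finite_subalgebra.real_cond_exp_int(1)[OF sfs Dsq])
    also have "\<dots> = (\<integral>x. (D k x)\<^sup>2 \<partial>M)"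
      by (rule sigma_finite_subalgebra.real_cond_exp_int(2)[OF sfs Dsq])
    finally show ?thesis .
  qed
  have Ypt: "(Y k x)\<^sup>2 \<le> 2 * (D k x)\<^sup>2 + 2 * (C k x)\<^sup>2" for k x
  proof -
    have "0 \<le> (D k x + C k x)\<^sup>2" by simp
    then show ?thesis unfolding Y_def by (simp add: power2_eq_square algebra_simps)
  qed
  have YM: "Y k \<in> borel_measurable M" for k unfolding Y_def using DM CM by measurable
  have Ysq: "integrable M (\<lambda>x. (Y k x)\<^sup>2)" for k
    by (rule Bochner_Integration.integrable_bound[of _ "\<lambda>x. 2 * (D k x)\<^sup>2 + 2 * (C k x)\<^sup>2"])
      (use Dsq Csq YM Ypt in auto)
  have Yle: "(\<integral>x. (Y k x)\<^sup>2 \<partial>M) \<le> 4 * (\<integral>x. (D k x)\<^sup>2 \<partial>M)" for k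
  proof -
    have "(\<integral>x. (Y k x)\<^sup>2 \<partial>M) \<le> (\<integral>x. 2 * (D k x)\<^sup>2 + 2 * (C k x)\<^sup>2 \<partial>M)"
      by (rule integral_mono) (use Ysq Dsq Csq Ypt in auto)
    also have "\<dots> = 2 * (\<integral>x. (D k x)\<^sup>2 \<partial>M) + 2 * (\<integral>x. (C k x)\<^sup>2 \<partial>M)"
      using Dsq Csq by simp
    finally show ?thesis using Cle[of k] by simp
  qed
  have Ysum: "summable (\<lambda>k. \<integral>x. (Y k x)\<^sup>2 \<partial>M)"
  proof (rule summable_comparison_test)
    show "\<exists>N. \<forall>n\<ge>N. norm (\<integral>x. (Y n x)\<^sup>2 \<partial>M) \<le> 4 * (\<integral>x. (D n x)\<^sup>2 \<partial>M)"
      using Yle by auto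
    show "summable (\<lambda>n. 4 * (\<integral>x. (D n x)\<^sup>2 \<partial>M))" using Dsum by (rule summable_mult)
  qed
  interpret Yo: ortho M F Y
  proof
    show "filtration_of M F" by (rule filt)
    fix k
    show "Y k \<in> borel_measurable (F (Suc k))"
      unfolding Y_def using DF[of k] filt_mono[OF filt _ CF[of k], of "Suc k"] by auto
    show "integrable M (\<lambda>x. (Y k x)\<^sup>2)" by (rule Ysq)
    fix Z :: "'a \<Rightarrow> real" assume Zm: "Z \<in> borel_measurable (F k)" and Zi: "integrable M (\<lambda>x. (Z x)\<^sup>2)"
    have ZM: "Z \<in> borel_measurable M" using filt_M[OF filt Zm] .
    have ZD: "integrable M (\<lambda>x. Z x * D k x)" using L2_mult[OF Zi Dsq ZM DM] .
    have ZC: "integrable M (\<lambda>x. Z x * C k x)" "(\<integral>x. Z x * C k x \<partial>M) = (\<integral>x. Z x * D k x \<partial>M)"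
      unfolding C_def using sigma_finite_subalgebra.real_cond_exp_intg[OF sfs ZD Zm DM] by auto
    have "(\<integral>x. Z x * Y k x \<partial>M) = (\<integral>x. Z x * D k x - Z x * C k x \<partial>M)"
      unfolding Y_def by (simp add: algebra_simps)
    also have "\<dots> = 0" using ZD ZC by simp
    finally show "(\<integral>x. Z x * Y k x \<partial>M) = 0" .
  qed
  have AEC: "AE x in M. \<forall>k. C k x \<le> 0"
    unfolding AE_all_countable C_def D_def using assms(5) by auto
  have AEY: "AE x in M. \<forall>e>0. \<exists>m. \<forall>j\<ge>m. \<bar>\<Sum>k\<in>{m..<j}. Y k x\<bar> < e"
    by (rule Yo.cauchy[OF Ysum])
  show ?thesis
    using AEC AEY assms(6)
  proof eventually_elim
    case (elim x)
    show ?case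
    proof
      assume "sign_switch_io \<xi> a x"
      then have inf: "infinite {n. \<xi> n x < a}" unfolding sign_switch_io_def by auto
      show "limsup (\<lambda>n. ereal (\<xi> n x)) \<le> ereal (a + b)"
      proof (rule pathwise[OF assms(4) _ _ _ inf])
        fix k assume "a \<le> \<xi> k x"
        then show "\<xi> (Suc k) x - \<xi> k x \<le> Y k x"
          using elim(1) unfolding Y_def D_def by (auto simp: indicator_def)
      next
        show "\<forall>e>0. \<exists>m. \<forall>j\<ge>m. \<bar>\<Sum>k\<in>{m..<j}. Y k x\<bar> < e" using elim(2) .
      next
        show "limsup (\<lambda>k. ereal ((if \<xi> k x < a \<and> a < \<xi> (Suc k) x then 1 else 0) * (\<xi> (Suc k) x - a))) \<le> ereal b"
          using elim(3) by (simp add: indicator_def of_bool_def)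
      qed
    qed
  qed
qed

end
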